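(* Let $N\ge1$ be an integer, $d>0$, $0\le s_1\le s_2\le\dots\le s_N$, and let $T$ satisfy $Nd\le T<(N+1)d$. Consider the problem $$\min_{x\in\mathbb{R}^{N+1}}\ \sum_{i=1}^{N+1}x_i^2$$ subject to - $\sum_{i=1}^k x_i\ge s_k+kd$ for $1\le k\le N$, - $x_i\ge 2d$ for $2\le i\le N$, - $x_{N+1}\ge d$, - $\sum_{i=1}^{N+1}x_i=T+Nd$. Assume this problem is feasible. Then its optimal solution $x^*$ is given by $$x_1^*=\max\left\{\frac{T-(N-2)d}{2},\ \max_{1\le k\le N}\{s_k-(k-2)d\}\right\},$$ $$x_i^*=2d\quad (2\le i\le N),$$ $$x_{N+1}^*=T-(N-2)d-x_1^*.$$
   Context: This optimization problem arises from minimizing the area under the age-of-information curve of a single energy harvesting transmitter. The $s_k$ are energy arrival times, $d$ is the fixed service (transmission) time, and $T$ is the session length. The variables are $x_1=t_1+d$, $x_i=t_i-t_{i-1}+d$ for $2\le i\le N$, and $x_{N+1}=T-t_N$, where $t_i$ are the update transmission times. *)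

theory Defs
  imports Complex_Main
begin

text \<open>Vectors x in R^(N+1) are represented as functions nat => real; only the
  coordinates x 1, ..., x (N+1) are relevant.\<close>

definition aoi_obj :: "nat \<Rightarrow> (nat \<Rightarrow> real) \<Rightarrow> real" where
  "aoi_obj N x = (\<Sum>i=1..N+1. (x i)^2)"

definition aoi_feasible ::
  "nat \<Rightarrow> real \<Rightarrow> real \<Rightarrow> (nat \<Rightarrow> real) \<Rightarrow> (nat \<Rightarrow> real) \<Rightarrow> bool" where
  "aoi_feasible N d T s x \<longleftrightarrow>
     (\<forall>k\<in>{1..N}. (\<Sum>i=1..k. x i) \<ge> s k + real k * d) \<and>
     (\<forall>i\<in>{2..N}. x i \<ge> 2 * d) \<and>
     x (N+1) \<ge> d \<and>
     (\<Sum>i=1..N+1. x i) = T + real N * d"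

definition aoi_optimal ::
  "nat \<Rightarrow> real \<Rightarrow> real \<Rightarrow> (nat \<Rightarrow> real) \<Rightarrow> (nat \<Rightarrow> real) \<Rightarrow> bool" where
  "aoi_optimal N d T s x \<longleftrightarrow>
     aoi_feasible N d T s x \<and> (\<forall>y. aoi_feasible N d T s y \<longrightarrow> aoi_obj N x \<le> aoi_obj N y)"

end

theory Submission
  imports Defs
begin

lemma split_sum:
  fixes f :: "nat \<Rightarrow> real"
  assumes "N \<ge> 1"
  shows "(\<Sum>i=1..N+1. f i) = f 1 + (\<Sum>i=2..N. f i) + f (N+1)"
proof -
  have "(\<Sum>i=1..N+1. f i) = (\<Sum>i=1..N. f i) + f (N+1)" by simp
  moreover have "(\<Sum>i=1..N. f i) = f 1 + (\<Sum>i=2..N. f i)"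
    using assms sum.atLeast_Suc_atMost[of 1 N f] by (simp add: numeral_2_eq_2)
  ultimately show ?thesis by simp
qed

lemma feas_E:
  assumes F: "aoi_feasible N d T s y" and N: "N \<ge> 1"
  shows "0 \<le> (\<Sum>i=2..N. y i - 2*d)"
    and "y 1 + (\<Sum>i=2..N. y i - 2*d) + y (N+1) = T - (real N - 2) * d"
    and "\<And>k. k \<in> {1..N} \<Longrightarrow> s k - (real k - 2) * d \<le> y 1 + (\<Sum>i=2..N. y i - 2*d)"
proof -
  have mid: "\<And>i. i \<in> {2..N} \<Longrightarrow> 0 \<le> y i - 2*d" using F unfolding aoi_feasible_def by auto
  then show "0 \<le> (\<Sum>i=2..N. y i - 2*d)" by (rule sum_nonneg)
  have c2: "(\<Sum>i=2..N. 2*d) = (real N - 1) * 2 * d"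
    using N by (simp add: of_nat_diff)
  have tot: "(\<Sum>i=1..N+1. y i) = T + real N * d" using F unfolding aoi_feasible_def by auto
  show "y 1 + (\<Sum>i=2..N. y i - 2*d) + y (N+1) = T - (real N - 2) * d"
    using tot split_sum[OF N, of y] c2 by (simp add: sum_subtractf algebra_simps)
  fix k assume k: "k \<in> {1..N}"
  have ck: "(\<Sum>i=1..k. y i) \<ge> s k + real k * d" using F k unfolding aoi_feasible_def by auto
  have sk: "(\<Sum>i=1..k. y i) = y 1 + (\<Sum>i=2..k. y i)"
    using k sum.atLeast_Suc_atMost[of 1 k y] by (simp add: numeral_2_eq_2)
  have c2k: "(\<Sum>i=2..k. 2*d) = (real k - 1) * 2 * d"
    using k by (simp add: of_nat_diff)
  have le: "(\<Sum>i=2..k. y i - 2*d) \<le> (\<Sum>i=2..N. y i - 2*d)"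
    apply (rule sum_mono2) using k mid by auto
  show "s k - (real k - 2) * d \<le> y 1 + (\<Sum>i=2..N. y i - 2*d)"
    using ck sk c2k le by (simp add: sum_subtractf algebra_simps)
qed

theorem theorem1:
  fixes N :: nat and d T :: real and s :: "nat \<Rightarrow> real" and xs :: "nat \<Rightarrow> real"
  assumes "N \<ge> 1" and "d > 0"
    and "0 \<le> s 1"
    and "\<And>i j. 1 \<le> i \<Longrightarrow> i \<le> j \<Longrightarrow> j \<le> N \<Longrightarrow> s i \<le> s j"
    and "real N * d \<le> T" and "T < (real N + 1) * d"
    and "\<exists>x. aoi_feasible N d T s x"
    and "xs 1 = max ((T - (real N - 2) * d) / 2)
                     (Max ((\<lambda>k. s k - (real k - 2) * d) ` {1..N}))"
    and "\<And>i. 2 \<le> i \<Longrightarrow> i \<le> N \<Longrightarrow> xs i = 2 * d"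
    and "xs (N+1) = T - (real N - 2) * d - xs 1"
  shows "aoi_optimal N d T s xs \<and>
         (\<forall>y. aoi_optimal N d T s y \<longrightarrow> (\<forall>i\<in>{1..N+1}. y i = xs i))"
proof -
  note N = assms(1) and dpos = assms(2)
  define M where "M = T - (real N - 2) * d"
  define L where "L = Max ((\<lambda>k. s k - (real k - 2) * d) ` {1..N})"
  have x1: "xs 1 = max (M/2) L" using assms(8) unfolding M_def L_def by simp
  have xN: "xs (N+1) = M - xs 1" using assms(10) unfolding M_def by simp
  have Lge: "\<And>k. k \<in> {1..N} \<Longrightarrow> s k - (real k - 2) * d \<le> L"
    unfolding L_def by (rule Max_ge) auto
  obtain x where fx: "aoi_feasible N d T s x" using assms(7) by blast
  have Lle: "L \<le> M - d"
  proof -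
    have "L \<in> (\<lambda>k. s k - (real k - 2) * d) ` {1..N}" unfolding L_def
      apply (rule Max_in) using N by auto
    then obtain k where k: "k \<in> {1..N}" "L = s k - (real k - 2) * d" by auto
    have "x (N+1) \<ge> d" using fx unfolding aoi_feasible_def by auto
    then show ?thesis using feas_E(2)[OF fx N] feas_E(3)[OF fx N k(1)] k(2) unfolding M_def by linarith
  qed
  have M2: "2*d \<le> M" "M < 3*d" using assms(5,6) unfolding M_def by (auto simp: algebra_simps)
  have x1le: "xs 1 \<le> M - d" using x1 Lle M2 by auto
  have x1lt: "xs 1 < 2*d" using x1le M2 by auto
  have mid: "\<And>i. i \<in> {2..N} \<Longrightarrow> xs i = 2*d" using assms(9) by auto
  have midsum: "(\<Sum>i=2..N. xs i) = (real N - 1) * 2 * d"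
    using N by (simp add: mid of_nat_diff)
  have feas: "aoi_feasible N d T s xs"
    unfolding aoi_feasible_def
  proof (intro conjI ballI)
    fix k assume k: "k \<in> {1..N}"
    have sk: "(\<Sum>i=1..k. xs i) = xs 1 + (\<Sum>i=2..k. xs i)"
      using k sum.atLeast_Suc_atMost[of 1 k xs] by (simp add: numeral_2_eq_2)
    have "(\<Sum>i=2..k. xs i) = (real k - 1) * 2 * d"
      using k by (simp add: mid of_nat_diff)
    then show "s k + real k * d \<le> (\<Sum>i=1..k. xs i)"
      using sk Lge[OF k] x1 by (simp add: algebra_simps)
  next
    fix i assume "i \<in> {2..N}" then show "2*d \<le> xs i" using mid by simp
  next
    show "d \<le> xs (N+1)" using xN x1le by simp
  next
    show "(\<Sum>i=1..N+1. xs i) = T + real N * d"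
      using split_sum[OF N, of xs] midsum xN unfolding M_def by (simp add: algebra_simps)
  qed
  have key: "\<And>y. aoi_feasible N d T s y \<Longrightarrow>
      aoi_obj N xs + (\<Sum>i=1..N+1. (y i - xs i)^2) \<le> aoi_obj N y"
  proof -
    fix y assume fy: "aoi_feasible N d T s y"
    define E where "E = (\<Sum>i=2..N. y i - 2*d)"
    have E0: "0 \<le> E" using feas_E(1)[OF fy N] unfolding E_def .
    have Eb: "y 1 + E + y (N+1) = M" using feas_E(2)[OF fy N] unfolding E_def M_def .
    have EL: "L \<le> y 1 + E"
    proof -
      have "L \<in> (\<lambda>k. s k - (real k - 2) * d) ` {1..N}" unfolding L_def
        apply (rule Max_in) using N by auto
      then obtain k where k: "k \<in> {1..N}" "L = s k - (real k - 2) * d" by auto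
      then show ?thesis using feas_E(3)[OF fy N k(1)] unfolding E_def by simp
    qed
    have lin: "0 \<le> (\<Sum>i=1..N+1. xs i * (y i - xs i))"
    proof -
      have "(\<Sum>i=2..N. xs i * (y i - xs i)) = 2*d*E"
        unfolding E_def by (simp add: mid sum_distrib_left)
      then have eq: "(\<Sum>i=1..N+1. xs i * (y i - xs i)) =
          (y 1 - xs 1) * (2 * xs 1 - M) + E * (2*d - M + xs 1)"
      proof -
        have sp: "(\<Sum>i=1..N+1. xs i * (y i - xs i)) = xs 1 * (y 1 - xs 1) + 2*d*E + xs (N+1) * (y (N+1) - xs (N+1))"
          using split_sum[OF N, of "\<lambda>i. xs i * (y i - xs i)"] \<open>(\<Sum>i=2..N. xs i * (y i - xs i)) = 2*d*E\<close> by linarith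
        have yN: "y (N+1) = M - y 1 - E" using Eb by linarith
        show ?thesis unfolding sp yN xN by algebra
      qed
      have A: "(y 1 - xs 1) * (2 * xs 1 - M) \<ge> - E * (2 * xs 1 - M)"
      proof (cases "L \<le> M/2")
        case True then have "xs 1 = M/2" using x1 by simp
        then have "2 * xs 1 - M = 0" by simp
        then show ?thesis by simp
      next
        case False then have "xs 1 = L" "2 * xs 1 - M \<ge> 0" using x1 by auto
        then show ?thesis using EL by (intro mult_right_mono) auto
      qed
      have "- E * (2 * xs 1 - M) + E * (2*d - M + xs 1) = E * (2*d - xs 1)" by algebra
      moreover have "E * (2*d - xs 1) \<ge> 0" using E0 x1lt by simp
      ultimately show ?thesis using eq A by linarith
    qed
    have "aoi_obj N y = (\<Sum>i=1..N+1. (xs i)^2 + 2 * (xs i * (y i - xs i)) + (y i - xs i)^2)"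
      unfolding aoi_obj_def by (rule sum.cong) (auto simp: power2_eq_square algebra_simps)
    also have "\<dots> = aoi_obj N xs + 2 * (\<Sum>i=1..N+1. xs i * (y i - xs i)) + (\<Sum>i=1..N+1. (y i - xs i)^2)"
      unfolding aoi_obj_def by (simp add: sum.distrib sum_distrib_left)
    finally show "aoi_obj N xs + (\<Sum>i=1..N+1. (y i - xs i)^2) \<le> aoi_obj N y" using lin by linarith
  qed
  have opt: "aoi_optimal N d T s xs"
    unfolding aoi_optimal_def
  proof (intro conjI allI impI feas)
    fix y assume "aoi_feasible N d T s y"
    from key[OF this] show "aoi_obj N xs \<le> aoi_obj N y"
      using sum_nonneg[of "{1..N+1}" "\<lambda>i. (y i - xs i)^2"] by simp
  qed
  have uniq: "\<forall>y. aoi_optimal N d T s y \<longrightarrow> (\<forall>i\<in>{1..N+1}. y i = xs i)"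
  proof (intro allI impI ballI)
    fix y i assume oy: "aoi_optimal N d T s y" and i: "i \<in> {1..N+1}"
    have fy: "aoi_feasible N d T s y" and le: "aoi_obj N y \<le> aoi_obj N xs"
      using oy feas unfolding aoi_optimal_def by auto
    have s0: "(\<Sum>i=1..N+1. (y i - xs i)^2) = 0"
      using key[OF fy] le sum_nonneg[of "{1..N+1}" "\<lambda>i. (y i - xs i)^2"] by simp
    have "(y i - xs i)^2 = 0"
      using sum_nonneg_eq_0_iff[of "{1..N+1}" "\<lambda>i. (y i - xs i)^2"] s0 i by simp
    then show "y i = xs i" by simp
  qed
  show ?thesis using opt uniq by blast
qed

end
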